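(* For a semiring $(S,+,\cdot)$ the following are equivalent: (i) $S$ is a quasi completely regular semiring and $e+f=f+e$ for all $e,f\in E^+(S)$; (ii) $S$ is a b-lattice of quasi skew-rings and $e+f=f+e$ for all $e,f\in E^+(S)$; (iii) $S$ is additively quasi regular and $Reg^+S$ is a subsemigroup of $(S,+)$ which (as a semiring under the restricted operations) is a b-lattice of skew-rings.
   Context: A semiring $(S,+,\cdot)$ has two associative operations with $a(b+c)=ab+ac$, $(b+c)a=ba+ca$. $na$ is the $n$-fold sum of $a$. $E^+(S)$ is the set of additive idempotents; $Reg^+S$ is the set of additively regular elements ($a=a+x+a$ for some $x\in S$). $S$ is additively quasi regular if for each $a$ some $na$ is additively regular. $a$ is completely regular if there is $x$ with $a=a+x+a$, $a+x=x+a$, $a(a+x)=a+x$; $S$ is quasi completely regular if for each $a$ some $na$ is completely regular. A skew-ring is a semiring whose additive reduct is a (not necessarily commutative) group. A quasi skew-ring is a semiring $T$ containing a subsemiring $R$ which is a skew-ring such that for every $a\in T$ some $na\in R$. A b-lattice is a semiring with $(S,\cdot)$ a band and $(S,+)$ a semilattice; $S$ is a b-lattice of semirings of a class if there is a congruence $\rho$ on $S$ with $S/\rho$ a b-lattice and each $\rho$-class a subsemiring in that class. *)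

theory Defs
  imports Main
begin

text \<open>Semirings in the sense of the paper: a carrier S with two associative
  binary operations (no zero, no one, addition not necessarily commutative)
  satisfying both distributive laws.  Everything is relative to a carrier set,
  since subsemirings, congruence classes and quotients must be handled.\<close>

definition semiring :: "'a set \<Rightarrow> ('a \<Rightarrow> 'a \<Rightarrow> 'a) \<Rightarrow> ('a \<Rightarrow> 'a \<Rightarrow> 'a) \<Rightarrow> bool" where
  "semiring S add mul \<longleftrightarrow>
     (\<forall>a\<in>S. \<forall>b\<in>S. add a b \<in> S \<and> mul a b \<in> S) \<and>
     (\<forall>a\<in>S. \<forall>b\<in>S. \<forall>c\<in>S. add (add a b) c = add a (add b c)) \<and>
     (\<forall>a\<in>S. \<forall>b\<in>S. \<forall>c\<in>S. mul (mul a b) c = mul a (mul b c)) \<and>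
     (\<forall>a\<in>S. \<forall>b\<in>S. \<forall>c\<in>S. mul a (add b c) = add (mul a b) (mul a c)) \<and>
     (\<forall>a\<in>S. \<forall>b\<in>S. \<forall>c\<in>S. mul (add b c) a = add (mul b a) (mul c a))"

text \<open>n-fold sum n a (only used for n \<ge> 1).\<close>
fun nsum :: "('a \<Rightarrow> 'a \<Rightarrow> 'a) \<Rightarrow> nat \<Rightarrow> 'a \<Rightarrow> 'a" where
  "nsum add 0 a = a"
| "nsum add (Suc 0) a = a"
| "nsum add (Suc (Suc n)) a = add (nsum add (Suc n) a) a"

definition add_idem :: "'a set \<Rightarrow> ('a \<Rightarrow> 'a \<Rightarrow> 'a) \<Rightarrow> 'a set" where
  "add_idem S add = {e\<in>S. add e e = e}"

definition add_regular :: "'a set \<Rightarrow> ('a \<Rightarrow> 'a \<Rightarrow> 'a) \<Rightarrow> 'a \<Rightarrow> bool" where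
  "add_regular S add a \<longleftrightarrow> (\<exists>x\<in>S. a = add (add a x) a)"

definition Reg_add :: "'a set \<Rightarrow> ('a \<Rightarrow> 'a \<Rightarrow> 'a) \<Rightarrow> 'a set" where
  "Reg_add S add = {a\<in>S. add_regular S add a}"

definition add_quasi_regular :: "'a set \<Rightarrow> ('a \<Rightarrow> 'a \<Rightarrow> 'a) \<Rightarrow> bool" where
  "add_quasi_regular S add \<longleftrightarrow> (\<forall>a\<in>S. \<exists>n>0. add_regular S add (nsum add n a))"

definition completely_regular ::
  "'a set \<Rightarrow> ('a \<Rightarrow> 'a \<Rightarrow> 'a) \<Rightarrow> ('a \<Rightarrow> 'a \<Rightarrow> 'a) \<Rightarrow> 'a \<Rightarrow> bool" where
  "completely_regular S add mul a \<longleftrightarrow>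
     (\<exists>x\<in>S. a = add (add a x) a \<and> add a x = add x a \<and> mul a (add a x) = add a x)"

definition quasi_completely_regular ::
  "'a set \<Rightarrow> ('a \<Rightarrow> 'a \<Rightarrow> 'a) \<Rightarrow> ('a \<Rightarrow> 'a \<Rightarrow> 'a) \<Rightarrow> bool" where
  "quasi_completely_regular S add mul \<longleftrightarrow>
     semiring S add mul \<and> (\<forall>a\<in>S. \<exists>n>0. completely_regular S add mul (nsum add n a))"

definition skew_ring :: "'a set \<Rightarrow> ('a \<Rightarrow> 'a \<Rightarrow> 'a) \<Rightarrow> ('a \<Rightarrow> 'a \<Rightarrow> 'a) \<Rightarrow> bool" where
  "skew_ring S add mul \<longleftrightarrow> semiring S add mul \<and>
     (\<exists>z\<in>S. (\<forall>a\<in>S. add z a = a \<and> add a z = a \<and> (\<exists>b\<in>S. add a b = z \<and> add b a = z)))"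

definition subsemiring ::
  "'a set \<Rightarrow> 'a set \<Rightarrow> ('a \<Rightarrow> 'a \<Rightarrow> 'a) \<Rightarrow> ('a \<Rightarrow> 'a \<Rightarrow> 'a) \<Rightarrow> bool" where
  "subsemiring R S add mul \<longleftrightarrow> R \<subseteq> S \<and> (\<forall>a\<in>R. \<forall>b\<in>R. add a b \<in> R \<and> mul a b \<in> R)"

definition quasi_skew_ring :: "'a set \<Rightarrow> ('a \<Rightarrow> 'a \<Rightarrow> 'a) \<Rightarrow> ('a \<Rightarrow> 'a \<Rightarrow> 'a) \<Rightarrow> bool" where
  "quasi_skew_ring T add mul \<longleftrightarrow> semiring T add mul \<and>
     (\<exists>R. subsemiring R T add mul \<and> skew_ring R add mul \<and>
          (\<forall>a\<in>T. \<exists>n>0. nsum add n a \<in> R))"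

definition b_lattice :: "'a set \<Rightarrow> ('a \<Rightarrow> 'a \<Rightarrow> 'a) \<Rightarrow> ('a \<Rightarrow> 'a \<Rightarrow> 'a) \<Rightarrow> bool" where
  "b_lattice S add mul \<longleftrightarrow> semiring S add mul \<and>
     (\<forall>a\<in>S. mul a a = a) \<and> (\<forall>a\<in>S. add a a = a) \<and> (\<forall>a\<in>S. \<forall>b\<in>S. add a b = add b a)"

definition congruence :: "'a set \<Rightarrow> ('a \<Rightarrow> 'a \<Rightarrow> 'a) \<Rightarrow> ('a \<Rightarrow> 'a \<Rightarrow> 'a) \<Rightarrow> 'a rel \<Rightarrow> bool" where
  "congruence S add mul \<rho> \<longleftrightarrow> equiv S \<rho> \<and>
     (\<forall>a b c d. (a, b) \<in> \<rho> \<longrightarrow> (c, d) \<in> \<rho> \<longrightarrow>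
        (add a c, add b d) \<in> \<rho> \<and> (mul a c, mul b d) \<in> \<rho>)"

definition quot_op :: "'a rel \<Rightarrow> ('a \<Rightarrow> 'a \<Rightarrow> 'a) \<Rightarrow> 'a set \<Rightarrow> 'a set \<Rightarrow> 'a set" where
  "quot_op \<rho> f X Y = \<rho> `` {f (SOME x. x \<in> X) (SOME y. y \<in> Y)}"

definition b_lattice_of ::
  "('a set \<Rightarrow> ('a \<Rightarrow> 'a \<Rightarrow> 'a) \<Rightarrow> ('a \<Rightarrow> 'a \<Rightarrow> 'a) \<Rightarrow> bool) \<Rightarrow>
   'a set \<Rightarrow> ('a \<Rightarrow> 'a \<Rightarrow> 'a) \<Rightarrow> ('a \<Rightarrow> 'a \<Rightarrow> 'a) \<Rightarrow> bool" where
  "b_lattice_of P S add mul \<longleftrightarrow> semiring S add mul \<and>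
     (\<exists>\<rho>. congruence S add mul \<rho> \<and>
          b_lattice (S // \<rho>) (quot_op \<rho> add) (quot_op \<rho> mul) \<and>
          (\<forall>X\<in>S // \<rho>. subsemiring X S add mul \<and> P X add mul))"

end

theory Submission
  imports Defs
begin


locale srg =
  fixes S :: "'a set" and add :: "'a \<Rightarrow> 'a \<Rightarrow> 'a" (infixl "\<oplus>" 65)
    and mul :: "'a \<Rightarrow> 'a \<Rightarrow> 'a" (infixl "\<otimes>" 70)
  assumes sr: "semiring S add mul"
begin

lemma cl_add[simp]: "a \<in> S \<Longrightarrow> b \<in> S \<Longrightarrow> a \<oplus> b \<in> S"
  using sr unfolding semiring_def by blast
lemma cl_mul[simp]: "a \<in> S \<Longrightarrow> b \<in> S \<Longrightarrow> a \<otimes> b \<in> S"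
  using sr unfolding semiring_def by blast
lemma aassoc[simp]: "a \<in> S \<Longrightarrow> b \<in> S \<Longrightarrow> c \<in> S \<Longrightarrow> (a \<oplus> b) \<oplus> c = a \<oplus> (b \<oplus> c)"
  using sr unfolding semiring_def by blast
lemma massoc[simp]: "a \<in> S \<Longrightarrow> b \<in> S \<Longrightarrow> c \<in> S \<Longrightarrow> (a \<otimes> b) \<otimes> c = a \<otimes> (b \<otimes> c)"
  using sr unfolding semiring_def by blast
lemma distl: "a \<in> S \<Longrightarrow> b \<in> S \<Longrightarrow> c \<in> S \<Longrightarrow> a \<otimes> (b \<oplus> c) = a \<otimes> b \<oplus> a \<otimes> c"
  using sr unfolding semiring_def by blast
lemma distr: "a \<in> S \<Longrightarrow> b \<in> S \<Longrightarrow> c \<in> S \<Longrightarrow> (b \<oplus> c) \<otimes> a = b \<otimes> a \<oplus> c \<otimes> a"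
  using sr unfolding semiring_def by blast

lemma nsum_in[simp]: "a \<in> S \<Longrightarrow> nsum add n a \<in> S"
proof (induction n)
  case (Suc n) then show ?case by (cases n) auto
qed simp

lemma nsum_Suc: "n > 0 \<Longrightarrow> nsum add (Suc n) a = nsum add n a \<oplus> a"
  by (cases n) auto

lemma nsum_one[simp]: "nsum add (Suc 0) a = a" by simp

lemma nsum_plus: "a \<in> S \<Longrightarrow> m > 0 \<Longrightarrow> k > 0 \<Longrightarrow> nsum add (m + k) a = nsum add m a \<oplus> nsum add k a"
proof (induction k)
  case 0 then show ?case by simp
next
  case (Suc k)
  show ?case
  proof (cases "k = 0")
    case True then show ?thesis using Suc by (simp add: nsum_Suc)
  next
    case False
    have "nsum add (m + Suc k) a = nsum add (m + k) a \<oplus> a"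
      using Suc False nsum_Suc[of "m+k" a] by simp
    also have "\<dots> = nsum add m a \<oplus> nsum add k a \<oplus> a" using Suc False by simp
    also have "\<dots> = nsum add m a \<oplus> nsum add (Suc k) a" using Suc False nsum_Suc[of k a] by simp
    finally show ?thesis .
  qed
qed

lemma nsum_mult: "a \<in> S \<Longrightarrow> m > 0 \<Longrightarrow> n > 0 \<Longrightarrow> nsum add m (nsum add n a) = nsum add (m * n) a"
proof (induction m)
  case 0 then show ?case by simp
next
  case (Suc m)
  show ?case
  proof (cases "m = 0")
    case True then show ?thesis by simp
  next
    case False
    have "nsum add (Suc m) (nsum add n a) = nsum add m (nsum add n a) \<oplus> nsum add n a"
      using False by (simp add: nsum_Suc)
    also have "\<dots> = nsum add (m*n) a \<oplus> nsum add n a" using Suc False by simp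
    also have "\<dots> = nsum add (m*n + n) a" using Suc False by (simp add: nsum_plus)
    finally show ?thesis by (simp add: add.commute)
  qed
qed

lemma nsum_idem: "a \<oplus> a = a \<Longrightarrow> nsum add n a = a"
proof (induction n)
  case (Suc n) then show ?case by (cases n) auto
qed simp

lemma nsum_mulr: "a \<in> S \<Longrightarrow> g \<in> S \<Longrightarrow> nsum add n a \<otimes> g = nsum add n (a \<otimes> g)"
proof (induction n)
  case (Suc n) then show ?case by (cases n) (auto simp: distr)
qed simp

lemma nsum_mull: "a \<in> S \<Longrightarrow> g \<in> S \<Longrightarrow> g \<otimes> nsum add n a = nsum add n (g \<otimes> a)"
proof (induction n)
  case (Suc n) then show ?case by (cases n) (auto simp: distl)
qed simp

end



context srg
begin

definition grp :: "'a \<Rightarrow> 'a \<Rightarrow> bool" where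
  "grp e p \<longleftrightarrow> e \<in> S \<and> p \<in> S \<and> e \<oplus> e = e \<and> p \<oplus> e = p \<and> e \<oplus> p = p \<and>
     (\<exists>y\<in>S. p \<oplus> y = e \<and> y \<oplus> p = e \<and> y \<oplus> e = y \<and> e \<oplus> y = y)"

lemma grp_in: "grp e p \<Longrightarrow> e \<in> S \<and> p \<in> S \<and> e \<oplus> e = e"
  unfolding grp_def by blast

lemma reg_grp:
  assumes p: "p \<in> S" and x: "x \<in> S" and r: "p = p \<oplus> x \<oplus> p" and c: "p \<oplus> x = x \<oplus> p"
  shows "grp (p \<oplus> x) p"
proof -
  obtain e where e_def: "e = p \<oplus> x" by blast
  have eS: "e \<in> S" using p x e_def by simp
  have r': "p \<oplus> (x \<oplus> p) = p" using r p x by (metis aassoc)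
  have pe: "p \<oplus> e = p" unfolding e_def using c r' by metis
  have ep: "e \<oplus> p = p" unfolding e_def using r' p x by (metis aassoc)
  have ee: "e \<oplus> e = e" using ep eS p x unfolding e_def by (metis aassoc)
  obtain y where y_def: "y = e \<oplus> x \<oplus> e" by blast
  have yS: "y \<in> S" using y_def eS x by simp
  have "p \<oplus> y = ((p \<oplus> e) \<oplus> x) \<oplus> e" using y_def p eS x by simp
  also have "\<dots> = e" using pe ee e_def by simp
  finally have py: "p \<oplus> y = e" .
  have xp: "x \<oplus> p = e" using c e_def by simp
  have "y \<oplus> p = e \<oplus> (x \<oplus> (e \<oplus> p))" using y_def p eS x by simp
  also have "\<dots> = e" using ep ee xp by simp
  finally have yp: "y \<oplus> p = e" .
  have ye: "y \<oplus> e = y" using y_def eS x ee by simp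
  have ey: "e \<oplus> y = y" using y_def eS x ee by (metis aassoc cl_add)
  show ?thesis unfolding grp_def e_def[symmetric] using eS p ee pe ep yS py yp ye ey by blast
qed

lemma grp_add: assumes "grp e p" "grp e q" shows "grp e (p \<oplus> q)"
proof -
  obtain yp where yp: "yp \<in> S" "p \<oplus> yp = e" "yp \<oplus> p = e" "yp \<oplus> e = yp" "e \<oplus> yp = yp"
    using assms(1) unfolding grp_def by blast
  obtain yq where yq: "yq \<in> S" "q \<oplus> yq = e" "yq \<oplus> q = e" "yq \<oplus> e = yq" "e \<oplus> yq = yq"
    using assms(2) unfolding grp_def by blast
  have S: "e \<in> S" "p \<in> S" "q \<in> S" and ee: "e \<oplus> e = e" and pe: "p \<oplus> e = p" "e \<oplus> p = p"
    and qe: "q \<oplus> e = q" "e \<oplus> q = q"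
    using assms unfolding grp_def by auto
  have 1: "(p \<oplus> q) \<oplus> (yq \<oplus> yp) = e"
  proof -
    have "(p \<oplus> q) \<oplus> (yq \<oplus> yp) = p \<oplus> (q \<oplus> (yq \<oplus> yp))" using S yp(1) yq(1) by simp
    also have "\<dots> = p \<oplus> ((q \<oplus> yq) \<oplus> yp)" using aassoc[OF S(3) yq(1) yp(1)] by simp
    also have "\<dots> = p \<oplus> (e \<oplus> yp)" by (simp only: yq(2))
    also have "\<dots> = e" by (simp only: yp(5) yp(2))
    finally show ?thesis .
  qed
  have 2: "(yq \<oplus> yp) \<oplus> (p \<oplus> q) = e"
  proof -
    have "(yq \<oplus> yp) \<oplus> (p \<oplus> q) = yq \<oplus> (yp \<oplus> (p \<oplus> q))" using S yp(1) yq(1) by simp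
    also have "\<dots> = yq \<oplus> ((yp \<oplus> p) \<oplus> q)" using aassoc[OF yp(1) S(2) S(3)] by simp
    also have "\<dots> = yq \<oplus> (e \<oplus> q)" by (simp only: yp(3))
    also have "\<dots> = e" by (simp only: qe(2) yq(3))
    finally show ?thesis .
  qed
  have 3: "(yq \<oplus> yp) \<oplus> e = yq \<oplus> yp" using yp yq S by simp
  have 4: "e \<oplus> (yq \<oplus> yp) = yq \<oplus> yp" by (metis aassoc[OF S(1) yq(1) yp(1)] yq(5))
  have 5: "(p \<oplus> q) \<oplus> e = p \<oplus> q" using S qe by simp
  have 6: "e \<oplus> (p \<oplus> q) = p \<oplus> q" by (metis aassoc[OF S(1) S(2) S(3)] pe(2))
  have 7: "yq \<oplus> yp \<in> S" "p \<oplus> q \<in> S" using S yp(1) yq(1) by auto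
  show ?thesis unfolding grp_def using S(1) ee 1 2 3 4 5 6 7 by blast
qed

lemma grp_nsum: assumes "grp e p" shows "grp e (nsum add n p)"
proof (induction n)
  case 0 then show ?case using assms by simp
next
  case (Suc n) then show ?case using assms by (cases n) (auto intro: grp_add)
qed

lemma grp_mul_idem_r:
  assumes "grp e p" "g \<in> S" "g \<oplus> g = g" shows "p \<otimes> g = e \<otimes> g"
proof -
  obtain y where y: "y \<in> S" "p \<oplus> y = e" "y \<oplus> p = e"
    using assms(1) unfolding grp_def by blast
  have S: "e \<in> S" "p \<in> S" and pe: "p \<oplus> e = p"
    using assms unfolding grp_def by auto
  have 1: "p \<otimes> g \<oplus> p \<otimes> g = p \<otimes> g" using assms S by (metis distl)
  have 2: "p \<otimes> g \<oplus> y \<otimes> g = e \<otimes> g" using y S assms by (metis distr)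
  have 3: "p \<otimes> g \<oplus> e \<otimes> g = p \<otimes> g" using pe S assms by (metis distr)
  have "e \<otimes> g = p \<otimes> g \<oplus> p \<otimes> g \<oplus> y \<otimes> g" using 1 2 by simp
  also have "\<dots> = p \<otimes> g \<oplus> e \<otimes> g" using 2 S y assms by simp
  finally show ?thesis using 3 by simp
qed

lemma grp_mul_idem_l:
  assumes "grp e p" "g \<in> S" "g \<oplus> g = g" shows "g \<otimes> p = g \<otimes> e"
proof -
  obtain y where y: "y \<in> S" "p \<oplus> y = e" "y \<oplus> p = e"
    using assms(1) unfolding grp_def by blast
  have S: "e \<in> S" "p \<in> S" and pe: "p \<oplus> e = p"
    using assms unfolding grp_def by auto
  have 1: "g \<otimes> p \<oplus> g \<otimes> p = g \<otimes> p" using assms S by (metis distr)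
  have 2: "g \<otimes> p \<oplus> g \<otimes> y = g \<otimes> e" using y S assms by (metis distl)
  have 3: "g \<otimes> p \<oplus> g \<otimes> e = g \<otimes> p" using pe S assms by (metis distl)
  have "g \<otimes> e = g \<otimes> p \<oplus> g \<otimes> p \<oplus> g \<otimes> y" using 1 2 by simp
  also have "\<dots> = g \<otimes> p \<oplus> g \<otimes> e" using 2 S y assms by simp
  finally show ?thesis using 3 by simp
qed

lemma grp_mul:
  assumes "grp e p" "grp f q" shows "grp (e \<otimes> f) (p \<otimes> q)"
proof -
  obtain yq where yq: "yq \<in> S" "q \<oplus> yq = f" "yq \<oplus> q = f" "yq \<oplus> f = yq" "f \<oplus> yq = yq"
    using assms(2) unfolding grp_def by blast
  have S: "e \<in> S" "p \<in> S" "f \<in> S" "q \<in> S" and ff: "f \<oplus> f = f" and ee: "e \<oplus> e = e"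
    and qf: "q \<oplus> f = q" "f \<oplus> q = q"
    using assms unfolding grp_def by auto
  have pf: "p \<otimes> f = e \<otimes> f" using grp_mul_idem_r[OF assms(1) S(3) ff] .
  have 1: "p \<otimes> q \<oplus> p \<otimes> yq = e \<otimes> f" using yq S pf by (metis distl)
  have 2: "p \<otimes> yq \<oplus> p \<otimes> q = e \<otimes> f" using yq S pf by (metis distl)
  have 3: "p \<otimes> q \<oplus> e \<otimes> f = p \<otimes> q" using qf S pf by (metis distl)
  have 4: "e \<otimes> f \<oplus> p \<otimes> q = p \<otimes> q" using qf S pf by (metis distl)
  have 5: "p \<otimes> yq \<oplus> e \<otimes> f = p \<otimes> yq" using yq S pf by (metis distl)
  have 6: "e \<otimes> f \<oplus> p \<otimes> yq = p \<otimes> yq" using yq S pf by (metis distl)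
  have 7: "e \<otimes> f \<oplus> e \<otimes> f = e \<otimes> f" using ff S by (metis distl)
  have 8: "p \<otimes> yq \<in> S" "p \<otimes> q \<in> S" "e \<otimes> f \<in> S" using S yq(1) by auto
  show ?thesis unfolding grp_def using 1 2 3 4 5 6 7 8 by blast
qed

end

locale qc = srg +
  assumes qcr: "\<forall>a\<in>S. \<exists>n>0. completely_regular S add mul (nsum add n a)"
    and comm: "\<forall>e\<in>add_idem S add. \<forall>f\<in>add_idem S add. e \<oplus> f = f \<oplus> e"
begin

lemma comm': "e \<in> S \<Longrightarrow> e \<oplus> e = e \<Longrightarrow> f \<in> S \<Longrightarrow> f \<oplus> f = f \<Longrightarrow> e \<oplus> f = f \<oplus> e"
  using comm unfolding add_idem_def by blast

lemma grp_unique: assumes "grp e p" "grp f p" shows "e = f"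
proof -
  obtain y where y: "y \<in> S" "y \<oplus> p = e" using assms(1) unfolding grp_def by blast
  obtain z where z: "z \<in> S" "z \<oplus> p = f" using assms(2) unfolding grp_def by blast
  have S: "e \<in> S" "p \<in> S" "f \<in> S" "e \<oplus> e = e" "f \<oplus> f = f" "p \<oplus> e = p" "p \<oplus> f = p"
    using assms unfolding grp_def by auto
  have "e \<oplus> f = y \<oplus> (p \<oplus> f)" using y S by (metis aassoc)
  hence 1: "e \<oplus> f = e" using S y by simp
  have "f \<oplus> e = z \<oplus> (p \<oplus> e)" using z S by (metis aassoc)
  hence 2: "f \<oplus> e = f" using S z by simp
  show ?thesis using 1 2 comm'[of e f] S by simp
qed

lemma idem_mul: assumes "e \<in> S" "e \<oplus> e = e" shows "e \<otimes> e = e"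
proof -
  obtain n where "n > 0" "completely_regular S add mul (nsum add n e)" using qcr assms by blast
  hence "completely_regular S add mul e" using nsum_idem assms by simp
  then obtain x where x: "x \<in> S" "e = e \<oplus> x \<oplus> e" "e \<oplus> x = x \<oplus> e" "e \<otimes> (e \<oplus> x) = e \<oplus> x"
    unfolding completely_regular_def by blast
  have g: "grp (e \<oplus> x) e" using reg_grp[OF assms(1) x(1-3)] .
  have "grp e e" unfolding grp_def using assms by blast
  hence "e \<oplus> x = e" using grp_unique g by blast
  thus ?thesis using x(4) by simp
qed

definition eps :: "'a \<Rightarrow> 'a" where
  "eps a = (SOME e. \<exists>n>0. grp e (nsum add n a))"

lemma eps_ex: assumes "a \<in> S" shows "\<exists>n>0. grp (eps a) (nsum add n a)"
proof -
  obtain n where n: "n > 0" "completely_regular S add mul (nsum add n a)" using qcr assms by blast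
  then obtain x where x: "x \<in> S" "nsum add n a = nsum add n a \<oplus> x \<oplus> nsum add n a"
    "nsum add n a \<oplus> x = x \<oplus> nsum add n a"
    unfolding completely_regular_def by blast
  have "grp (nsum add n a \<oplus> x) (nsum add n a)" using reg_grp[OF nsum_in[OF assms] x] .
  hence "\<exists>e. \<exists>n>0. grp e (nsum add n a)" using n by blast
  thus ?thesis unfolding eps_def by (rule someI_ex)
qed

lemma eps_unique: assumes "a \<in> S" "n > 0" "grp e (nsum add n a)" shows "eps a = e"
proof -
  obtain m where m: "m > 0" "grp (eps a) (nsum add m a)" using eps_ex assms by blast
  have "grp e (nsum add m (nsum add n a))" using grp_nsum assms by blast
  hence 1: "grp e (nsum add (m * n) a)" using nsum_mult assms m by simp
  have "grp (eps a) (nsum add n (nsum add m a))" using grp_nsum m by blast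
  hence 2: "grp (eps a) (nsum add (m * n) a)" using nsum_mult assms m by (simp add: mult.commute)
  show ?thesis using grp_unique 1 2 by blast
qed

lemma eps_grp: "grp e p \<Longrightarrow> eps p = e"
  using eps_unique[of p 1 e] grp_in by auto

lemma eps_idem: "e \<in> S \<Longrightarrow> e \<oplus> e = e \<Longrightarrow> eps e = e"
  by (rule eps_grp) (unfold grp_def, blast)

lemma eps_E: assumes "a \<in> S" shows "eps a \<in> S" "eps a \<oplus> eps a = eps a"
  using eps_ex[OF assms] grp_in by blast+

lemma mul_idem_r: assumes "a \<in> S" "g \<in> S" "g \<oplus> g = g" shows "a \<otimes> g = eps a \<otimes> g"
proof -
  obtain n where n: "n > 0" "grp (eps a) (nsum add n a)" using eps_ex assms by blast
  have "a \<otimes> g \<oplus> a \<otimes> g = a \<otimes> g" using assms by (metis distl)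
  hence "a \<otimes> g = nsum add n (a \<otimes> g)" using nsum_idem by simp
  also have "\<dots> = nsum add n a \<otimes> g" using nsum_mulr assms by simp
  also have "\<dots> = eps a \<otimes> g" using grp_mul_idem_r n assms by blast
  finally show ?thesis .
qed

lemma mul_idem_l: assumes "a \<in> S" "g \<in> S" "g \<oplus> g = g" shows "g \<otimes> a = g \<otimes> eps a"
proof -
  obtain n where n: "n > 0" "grp (eps a) (nsum add n a)" using eps_ex assms by blast
  have "g \<otimes> a \<oplus> g \<otimes> a = g \<otimes> a" using assms by (metis distr)
  hence "g \<otimes> a = nsum add n (g \<otimes> a)" using nsum_idem by simp
  also have "\<dots> = g \<otimes> nsum add n a" using nsum_mull assms by simp
  also have "\<dots> = g \<otimes> eps a" using grp_mul_idem_l n assms by blast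
  finally show ?thesis .
qed

lemma E_add: "e \<in> S \<Longrightarrow> e \<oplus> e = e \<Longrightarrow> f \<in> S \<Longrightarrow> f \<oplus> f = f \<Longrightarrow> (e \<oplus> f) \<oplus> (e \<oplus> f) = e \<oplus> f"
  by (metis aassoc cl_add comm')

lemma E_mul: "e \<in> S \<Longrightarrow> e \<oplus> e = e \<Longrightarrow> f \<in> S \<Longrightarrow> f \<oplus> f = f \<Longrightarrow> (e \<otimes> f) \<oplus> (e \<otimes> f) = e \<otimes> f"
  by (metis distl)

lemma E_eq:
  assumes "h \<in> S" "h \<oplus> h = h" "k \<in> S" "k \<oplus> k = k"
    and r: "\<And>g. g \<in> S \<Longrightarrow> g \<oplus> g = g \<Longrightarrow> h \<otimes> g = k \<otimes> g"
    and l: "\<And>g. g \<in> S \<Longrightarrow> g \<oplus> g = g \<Longrightarrow> g \<otimes> h = g \<otimes> k"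
  shows "h = k"
proof -
  have "h = h \<otimes> h" using idem_mul assms by simp
  also have "\<dots> = k \<otimes> h" using r assms by simp
  also have "\<dots> = k \<otimes> k" using l assms by simp
  also have "\<dots> = k" using idem_mul assms by simp
  finally show ?thesis .
qed

lemma eps_add: assumes "a \<in> S" "b \<in> S" shows "eps (a \<oplus> b) = eps a \<oplus> eps b"
proof (rule E_eq)
  show "eps (a \<oplus> b) \<in> S" "eps (a \<oplus> b) \<oplus> eps (a \<oplus> b) = eps (a \<oplus> b)" using eps_E assms by auto
  show "eps a \<oplus> eps b \<in> S" "(eps a \<oplus> eps b) \<oplus> (eps a \<oplus> eps b) = eps a \<oplus> eps b"
    using eps_E assms E_add by auto
  fix g assume g: "g \<in> S" "g \<oplus> g = g"
  have "eps (a \<oplus> b) \<otimes> g = (a \<oplus> b) \<otimes> g" using mul_idem_r g assms by simp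
  also have "\<dots> = a \<otimes> g \<oplus> b \<otimes> g" using distr assms g by simp
  also have "\<dots> = eps a \<otimes> g \<oplus> eps b \<otimes> g" using mul_idem_r g assms by simp
  also have "\<dots> = (eps a \<oplus> eps b) \<otimes> g" using distr eps_E assms g by simp
  finally show "eps (a \<oplus> b) \<otimes> g = (eps a \<oplus> eps b) \<otimes> g" .
  have "g \<otimes> eps (a \<oplus> b) = g \<otimes> (a \<oplus> b)" using mul_idem_l g assms by simp
  also have "\<dots> = g \<otimes> a \<oplus> g \<otimes> b" using distl assms g by simp
  also have "\<dots> = g \<otimes> eps a \<oplus> g \<otimes> eps b" using mul_idem_l g assms by simp
  also have "\<dots> = g \<otimes> (eps a \<oplus> eps b)" using distl eps_E assms g by simp
  finally show "g \<otimes> eps (a \<oplus> b) = g \<otimes> (eps a \<oplus> eps b)" .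
qed

lemma eps_mul: assumes "a \<in> S" "b \<in> S" shows "eps (a \<otimes> b) = eps a \<otimes> eps b"
proof (rule E_eq)
  show "eps (a \<otimes> b) \<in> S" "eps (a \<otimes> b) \<oplus> eps (a \<otimes> b) = eps (a \<otimes> b)" using eps_E assms by auto
  show "eps a \<otimes> eps b \<in> S" "(eps a \<otimes> eps b) \<oplus> (eps a \<otimes> eps b) = eps a \<otimes> eps b"
    using eps_E assms E_mul by auto
  fix g assume g: "g \<in> S" "g \<oplus> g = g"
  have bg: "eps b \<otimes> g \<in> S" "(eps b \<otimes> g) \<oplus> (eps b \<otimes> g) = eps b \<otimes> g" using E_mul eps_E assms g by auto
  have "eps (a \<otimes> b) \<otimes> g = (a \<otimes> b) \<otimes> g" using mul_idem_r g assms by simp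
  also have "\<dots> = a \<otimes> (b \<otimes> g)" using assms g by simp
  also have "\<dots> = a \<otimes> (eps b \<otimes> g)" using mul_idem_r g assms by simp
  also have "\<dots> = eps a \<otimes> (eps b \<otimes> g)" using mul_idem_r[OF assms(1) bg] by simp
  also have "\<dots> = (eps a \<otimes> eps b) \<otimes> g" using eps_E assms g by simp
  finally show "eps (a \<otimes> b) \<otimes> g = (eps a \<otimes> eps b) \<otimes> g" .
  have ga: "g \<otimes> eps a \<in> S" "(g \<otimes> eps a) \<oplus> (g \<otimes> eps a) = g \<otimes> eps a" using E_mul eps_E assms g by auto
  have "g \<otimes> eps (a \<otimes> b) = g \<otimes> (a \<otimes> b)" using mul_idem_l g assms by simp
  also have "\<dots> = (g \<otimes> a) \<otimes> b" using assms g by simp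
  also have "\<dots> = (g \<otimes> eps a) \<otimes> b" using mul_idem_l g assms by simp
  also have "\<dots> = (g \<otimes> eps a) \<otimes> eps b" using mul_idem_l[OF assms(2) ga] by simp
  also have "\<dots> = g \<otimes> (eps a \<otimes> eps b)" using eps_E assms g by simp
  finally show "g \<otimes> eps (a \<otimes> b) = g \<otimes> (eps a \<otimes> eps b)" .
qed

lemma regular_grp: assumes "a \<in> S" "add_regular S add a" shows "grp (eps a) a"
proof -
  obtain x where x: "x \<in> S" "a = a \<oplus> x \<oplus> a" using assms unfolding add_regular_def by blast
  have g1: "(a \<oplus> x) \<oplus> (a \<oplus> x) = a \<oplus> x" using x assms by (metis aassoc cl_add)
  have g2: "(x \<oplus> a) \<oplus> (x \<oplus> a) = x \<oplus> a" using x assms by (metis aassoc cl_add)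
  have "a \<oplus> x = eps (a \<oplus> x)" using eps_idem g1 x assms by simp
  also have "\<dots> = eps a \<oplus> eps x" using eps_add x assms by simp
  also have "\<dots> = eps x \<oplus> eps a" using comm' eps_E x assms by simp
  also have "\<dots> = eps (x \<oplus> a)" using eps_add x assms by simp
  also have "\<dots> = x \<oplus> a" using eps_idem g2 x assms by simp
  finally have c: "a \<oplus> x = x \<oplus> a" .
  have g: "grp (a \<oplus> x) a" using reg_grp[OF assms(1) x c] .
  thus ?thesis using eps_grp by simp
qed

end



lemma quot_op_class:
  assumes eq: "equiv T r" and cp: "\<And>a b c d. (a, b) \<in> r \<Longrightarrow> (c, d) \<in> r \<Longrightarrow> (f a c, f b d) \<in> r"
    and a: "a \<in> T" and b: "b \<in> T"
  shows "quot_op r f (r `` {a}) (r `` {b}) = r `` {f a b}"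
proof -
  have "a \<in> r `` {a}" using equiv_class_self[OF eq a] .
  hence "(SOME x. x \<in> r `` {a}) \<in> r `` {a}" by (rule someI)
  hence 1: "(a, SOME x. x \<in> r `` {a}) \<in> r" by simp
  have "b \<in> r `` {b}" using equiv_class_self[OF eq b] .
  hence "(SOME x. x \<in> r `` {b}) \<in> r `` {b}" by (rule someI)
  hence 2: "(b, SOME x. x \<in> r `` {b}) \<in> r" by simp
  have "(f a b, f (SOME x. x \<in> r `` {a}) (SOME x. x \<in> r `` {b})) \<in> r" using cp[OF 1 2] .
  hence "r `` {f a b} = r `` {f (SOME x. x \<in> r `` {a}) (SOME x. x \<in> r `` {b})}"
    using equiv_class_eq[OF eq] by blast
  thus ?thesis unfolding quot_op_def by simp
qed

lemma cong_quot_add: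
  "congruence T add mul r \<Longrightarrow> a \<in> T \<Longrightarrow> b \<in> T \<Longrightarrow> quot_op r add (r `` {a}) (r `` {b}) = r `` {add a b}"
  unfolding congruence_def by (rule quot_op_class) auto

lemma cong_quot_mul:
  "congruence T add mul r \<Longrightarrow> a \<in> T \<Longrightarrow> b \<in> T \<Longrightarrow> quot_op r mul (r `` {a}) (r `` {b}) = r `` {mul a b}"
  unfolding congruence_def by (rule quot_op_class) auto

lemma semiring_sub: "semiring S add mul \<Longrightarrow> subsemiring X S add mul \<Longrightarrow> semiring X add mul"
  unfolding semiring_def subsemiring_def by (meson subsetD)

lemma skew_idem:
  assumes sk: "skew_ring X add mul" and u: "u \<in> X" "add u u = u"
    and z: "z \<in> X" "\<forall>a\<in>X. add z a = a \<and> add a z = a"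
  shows "u = z"
proof -
  have sr: "semiring X add mul" using sk unfolding skew_ring_def by blast
  obtain z0 where z0: "z0 \<in> X" "\<forall>a\<in>X. add z0 a = a \<and> add a z0 = a \<and> (\<exists>b\<in>X. add a b = z0 \<and> add b a = z0)"
    using sk unfolding skew_ring_def by blast
  have "z = z0" using z z0 by metis
  then obtain b where b: "b \<in> X" "add b u = z" using z0 u by blast
  have "z = add b (add u u)" using b u by simp
  also have "\<dots> = add (add b u) u" using sr b(1) u(1) unfolding semiring_def by metis
  also have "\<dots> = u" using b z u by simp
  finally show ?thesis by simp
qed

lemma skew_cr:
  assumes sk: "skew_ring X add mul" and XS: "X \<subseteq> S" and p: "p \<in> X"
  shows "completely_regular S add mul p"
proof -
  have sr: "semiring X add mul" using sk unfolding skew_ring_def by blast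
  obtain z where z: "z \<in> X" "\<forall>a\<in>X. add z a = a \<and> add a z = a \<and> (\<exists>b\<in>X. add a b = z \<and> add b a = z)"
    using sk unfolding skew_ring_def by blast
  obtain b where b: "b \<in> X" "add p b = z" "add b p = z" using z p by blast
  have pz: "mul p z \<in> X" using sr p z unfolding semiring_def by blast
  have "add (mul p z) (mul p z) = mul p (add z z)" using sr p z unfolding semiring_def by metis
  also have "\<dots> = mul p z" using z by simp
  finally have "mul p z = z" using skew_idem[OF sk pz _ z(1)] z by blast
  hence "p = add (add p b) p \<and> add p b = add b p \<and> mul p (add p b) = add p b"
    using b z p by simp
  thus ?thesis unfolding completely_regular_def using b XS by blast
qed

context qc
begin

definition rel :: "'a set \<Rightarrow> 'a rel" where
  "rel T = {(a, b). a \<in> T \<and> b \<in> T \<and> eps a = eps b}"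

lemma rel_equiv: "equiv T (rel T)"
  unfolding equiv_def refl_on_def sym_def trans_def rel_def by auto

lemma rel_class: "a \<in> T \<Longrightarrow> rel T `` {a} = {b \<in> T. eps b = eps a}"
  unfolding rel_def by auto

lemma rel_cong:
  assumes TS: "T \<subseteq> S" and cl: "\<forall>a\<in>T. \<forall>b\<in>T. a \<oplus> b \<in> T \<and> a \<otimes> b \<in> T"
  shows "congruence T add mul (rel T)"
  unfolding congruence_def
proof (intro conjI rel_equiv allI impI)
  fix a b c d assume "(a, b) \<in> rel T" "(c, d) \<in> rel T"
  hence h: "a \<in> T" "b \<in> T" "c \<in> T" "d \<in> T" "eps a = eps b" "eps c = eps d" unfolding rel_def by auto
  hence s: "a \<in> S" "b \<in> S" "c \<in> S" "d \<in> S" using TS by auto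
  show "(a \<oplus> c, b \<oplus> d) \<in> rel T" unfolding rel_def using h s cl eps_add by auto
  show "(a \<otimes> c, b \<otimes> d) \<in> rel T" unfolding rel_def using h s cl eps_mul by auto
qed

lemma ball_quot: "(\<And>a. a \<in> T \<Longrightarrow> P (r `` {a})) \<Longrightarrow> \<forall>X\<in>T // r. P X"
  by (auto elim: quotientE)

lemma rel_blat:
  assumes TS: "T \<subseteq> S" and cl: "\<forall>a\<in>T. \<forall>b\<in>T. a \<oplus> b \<in> T \<and> a \<otimes> b \<in> T"
  shows "b_lattice (T // rel T) (quot_op (rel T) add) (quot_op (rel T) mul)"
proof -
  let ?r = "rel T"
  have cg: "congruence T add mul ?r" using rel_cong[OF TS cl] .
  have ca[simp]: "a \<in> T \<Longrightarrow> b \<in> T \<Longrightarrow> a \<oplus> b \<in> T" for a b using cl by blast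
  have cm[simp]: "a \<in> T \<Longrightarrow> b \<in> T \<Longrightarrow> a \<otimes> b \<in> T" for a b using cl by blast
  have inS[simp]: "a \<in> T \<Longrightarrow> a \<in> S" for a using TS by blast
  have qa[simp]: "a \<in> T \<Longrightarrow> b \<in> T \<Longrightarrow> quot_op ?r add (?r `` {a}) (?r `` {b}) = ?r `` {a \<oplus> b}" for a b
    using cong_quot_add[OF cg] by blast
  have qm[simp]: "a \<in> T \<Longrightarrow> b \<in> T \<Longrightarrow> quot_op ?r mul (?r `` {a}) (?r `` {b}) = ?r `` {a \<otimes> b}" for a b
    using cong_quot_mul[OF cg] by blast
  have qe: "a \<in> T \<Longrightarrow> b \<in> T \<Longrightarrow> eps a = eps b \<Longrightarrow> ?r `` {a} = ?r `` {b}" for a b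
    using rel_class by simp
  have qI[simp]: "a \<in> T \<Longrightarrow> ?r `` {a} \<in> T // ?r" for a by (rule quotientI)
  show ?thesis
    unfolding b_lattice_def semiring_def
  proof (intro conjI ball_quot)
    fix a b assume "a \<in> T" "b \<in> T"
    thus "quot_op ?r add (?r `` {a}) (?r `` {b}) \<in> T // ?r" by simp
  next
    fix a b assume "a \<in> T" "b \<in> T"
    thus "quot_op ?r mul (?r `` {a}) (?r `` {b}) \<in> T // ?r" by simp
  next
    fix a b c assume "a \<in> T" "b \<in> T" "c \<in> T"
    thus "quot_op ?r add (quot_op ?r add (?r `` {a}) (?r `` {b})) (?r `` {c}) =
          quot_op ?r add (?r `` {a}) (quot_op ?r add (?r `` {b}) (?r `` {c}))" by simp
  next
    fix a b c assume "a \<in> T" "b \<in> T" "c \<in> T"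
    thus "quot_op ?r mul (quot_op ?r mul (?r `` {a}) (?r `` {b})) (?r `` {c}) =
          quot_op ?r mul (?r `` {a}) (quot_op ?r mul (?r `` {b}) (?r `` {c}))" by simp
  next
    fix a b c assume "a \<in> T" "b \<in> T" "c \<in> T"
    thus "quot_op ?r mul (?r `` {a}) (quot_op ?r add (?r `` {b}) (?r `` {c})) =
          quot_op ?r add (quot_op ?r mul (?r `` {a}) (?r `` {b})) (quot_op ?r mul (?r `` {a}) (?r `` {c}))"
      by (simp add: distl)
  next
    fix a b c assume "a \<in> T" "b \<in> T" "c \<in> T"
    thus "quot_op ?r mul (quot_op ?r add (?r `` {b}) (?r `` {c})) (?r `` {a}) =
          quot_op ?r add (quot_op ?r mul (?r `` {b}) (?r `` {a})) (quot_op ?r mul (?r `` {c}) (?r `` {a}))"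
      by (simp add: distr)
  next
    fix a assume a: "a \<in> T"
    have "eps (a \<otimes> a) = eps a" using eps_mul[of a a] idem_mul[of "eps a"] eps_E[of a] a by simp
    thus "quot_op ?r mul (?r `` {a}) (?r `` {a}) = ?r `` {a}" using a qe[of "a \<otimes> a" a] by simp
  next
    fix a assume a: "a \<in> T"
    have "eps (a \<oplus> a) = eps a" using eps_add[of a a] eps_E[of a] a by simp
    thus "quot_op ?r add (?r `` {a}) (?r `` {a}) = ?r `` {a}" using a qe[of "a \<oplus> a" a] by simp
  next
    fix a b assume ab: "a \<in> T" "b \<in> T"
    have "eps (a \<oplus> b) = eps (b \<oplus> a)" using ab eps_add[of a b] eps_add[of b a] eps_E[of a] eps_E[of b] comm'[of "eps a" "eps b"] by simp
    thus "quot_op ?r add (?r `` {a}) (?r `` {b}) = quot_op ?r add (?r `` {b}) (?r `` {a})"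
      using ab qe[of "a \<oplus> b" "b \<oplus> a"] by simp
  qed
qed

end



context qc
begin

lemma grp_inv: assumes "grp e p" shows "\<exists>y. grp e y \<and> p \<oplus> y = e \<and> y \<oplus> p = e"
proof -
  obtain y where y: "y \<in> S" "p \<oplus> y = e" "y \<oplus> p = e" "y \<oplus> e = y" "e \<oplus> y = y"
    using assms unfolding grp_def by blast
  have "grp e y" unfolding grp_def using assms y unfolding grp_def by blast
  thus ?thesis using y by blast
qed

lemma grp_reg: assumes "grp e p" shows "p \<in> Reg_add S add"
proof -
  obtain y where y: "grp e y" "p \<oplus> y = e" "y \<oplus> p = e" using grp_inv assms by blast
  have S: "p \<in> S" "y \<in> S" "e \<oplus> p = p" using assms y grp_in unfolding grp_def by auto
  have "p = p \<oplus> y \<oplus> p" using y S by simp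
  thus ?thesis unfolding Reg_add_def add_regular_def using S by blast
qed

lemma class_sub:
  assumes e: "e \<in> S" "e \<oplus> e = e" and TS: "T \<subseteq> S"
    and cl: "\<forall>a\<in>T. \<forall>b\<in>T. a \<oplus> b \<in> T \<and> a \<otimes> b \<in> T"
  shows "subsemiring {b \<in> T. eps b = e} T add mul"
  unfolding subsemiring_def
proof (intro conjI ballI)
  show "{b \<in> T. eps b = e} \<subseteq> T" by blast
  fix a b assume a: "a \<in> {b \<in> T. eps b = e}" and b: "b \<in> {b \<in> T. eps b = e}"
  hence s: "a \<in> S" "b \<in> S" using TS by auto
  show "a \<oplus> b \<in> {b \<in> T. eps b = e}" using a b s cl eps_add[of a b] e by auto
  show "a \<otimes> b \<in> {b \<in> T. eps b = e}" using a b s cl eps_mul[of a b] e idem_mul by auto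
qed

lemma i_to_ii: "b_lattice_of quasi_skew_ring S add mul"
  unfolding b_lattice_of_def
proof (intro conjI sr exI[of _ "rel S"])
  have cl: "\<forall>a\<in>S. \<forall>b\<in>S. a \<oplus> b \<in> S \<and> a \<otimes> b \<in> S" by simp
  show "congruence S add mul (rel S)" using rel_cong[OF _ cl] by simp
  show "b_lattice (S // rel S) (quot_op (rel S) add) (quot_op (rel S) mul)" using rel_blat[OF _ cl] by simp
  show "\<forall>X\<in>S // rel S. subsemiring X S add mul \<and> quasi_skew_ring X add mul"
  proof (rule ball_quot)
    fix a assume a: "a \<in> S"
    define e where "e = eps a"
    have e: "e \<in> S" "e \<oplus> e = e" using eps_E a e_def by auto
    have X: "rel S `` {a} = {b \<in> S. eps b = e}" using rel_class a e_def by simp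
    have sub: "subsemiring {b \<in> S. eps b = e} S add mul" using class_sub[OF e _ cl] by simp
    have srX: "semiring {b \<in> S. eps b = e} add mul" using semiring_sub[OF sr sub] .
    let ?R = "{p. grp e p}"
    have RX: "?R \<subseteq> {b \<in> S. eps b = e}" using grp_in eps_grp by blast
    have Rcl: "\<forall>p\<in>?R. \<forall>q\<in>?R. p \<oplus> q \<in> ?R \<and> p \<otimes> q \<in> ?R"
      using grp_add grp_mul idem_mul e by fastforce
    have subR: "subsemiring ?R {b \<in> S. eps b = e} add mul"
      unfolding subsemiring_def using RX Rcl by blast
    have subRS: "subsemiring ?R S add mul"
      unfolding subsemiring_def using RX Rcl by blast
    have ge: "grp e e" unfolding grp_def using e by blast
    have sk: "skew_ring ?R add mul"
      unfolding skew_ring_def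
    proof (rule conjI[OF semiring_sub[OF sr subRS]], rule bexI[of _ e])
      show "e \<in> ?R" using ge by simp
      show "\<forall>p\<in>?R. e \<oplus> p = p \<and> p \<oplus> e = p \<and> (\<exists>b\<in>?R. p \<oplus> b = e \<and> b \<oplus> p = e)"
      proof
        fix p assume p: "p \<in> ?R"
        then obtain y where y: "grp e y" "p \<oplus> y = e" "y \<oplus> p = e" using grp_inv by auto
        have "e \<oplus> p = p \<and> p \<oplus> e = p" using p unfolding grp_def by auto
        thus "e \<oplus> p = p \<and> p \<oplus> e = p \<and> (\<exists>b\<in>?R. p \<oplus> b = e \<and> b \<oplus> p = e)" using y by auto
      qed
    qed
    have ex: "\<forall>b\<in>{b \<in> S. eps b = e}. \<exists>n>0. nsum add n b \<in> ?R" using eps_ex by auto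
    have "quasi_skew_ring {b \<in> S. eps b = e} add mul"
      unfolding quasi_skew_ring_def using srX subR sk ex by blast
    thus "subsemiring (rel S `` {a}) S add mul \<and> quasi_skew_ring (rel S `` {a}) add mul"
      using X sub by simp
  qed
qed

lemma reg_eq: "Reg_add S add = {a \<in> S. add_regular S add a}" unfolding Reg_add_def ..

lemma reg_add_closed:
  assumes a: "a \<in> Reg_add S add" and b: "b \<in> Reg_add S add"
  shows "a \<oplus> b \<in> Reg_add S add"
proof -
  have aS: "a \<in> S" "add_regular S add a" and bS: "b \<in> S" "add_regular S add b"
    using a b unfolding Reg_add_def by auto
  define e where "e = eps a"
  define f where "f = eps b"
  have ga: "grp e a" using regular_grp aS e_def by simp
  have gb: "grp f b" using regular_grp bS f_def by simp
  obtain ya where ya: "ya \<in> S" "ya \<oplus> a = e" using ga unfolding grp_def by blast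
  obtain yb where yb: "yb \<in> S" "b \<oplus> yb = f" using gb unfolding grp_def by blast
  have E: "e \<in> S" "e \<oplus> e = e" "f \<in> S" "f \<oplus> f = f" "a \<oplus> e = a" "f \<oplus> b = b"
    using ga gb unfolding grp_def by auto
  have fe: "f \<oplus> e = e \<oplus> f" using comm' E by simp
  have "(a \<oplus> b) \<oplus> (yb \<oplus> ya) \<oplus> (a \<oplus> b) = a \<oplus> ((b \<oplus> yb) \<oplus> ((ya \<oplus> a) \<oplus> b))"
    using aS(1) bS(1) ya(1) yb(1) by simp
  also have "\<dots> = a \<oplus> (f \<oplus> (e \<oplus> b))" by (simp only: ya(2) yb(2))
  also have "\<dots> = a \<oplus> ((f \<oplus> e) \<oplus> b)" using E bS by simp
  also have "\<dots> = a \<oplus> ((e \<oplus> f) \<oplus> b)" by (simp only: fe)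
  also have "\<dots> = (a \<oplus> e) \<oplus> (f \<oplus> b)" using aS(1) bS(1) E(1) E(3) by simp
  also have "\<dots> = a \<oplus> b" using E by simp
  finally have r: "a \<oplus> b = (a \<oplus> b) \<oplus> (yb \<oplus> ya) \<oplus> (a \<oplus> b)" by simp
  have m: "yb \<oplus> ya \<in> S" "a \<oplus> b \<in> S" using aS bS ya yb by auto
  show ?thesis unfolding Reg_add_def add_regular_def using r m by blast
qed

lemma reg_mul_closed:
  assumes a: "a \<in> Reg_add S add" and b: "b \<in> Reg_add S add"
  shows "a \<otimes> b \<in> Reg_add S add"
proof -
  obtain x where x: "x \<in> S" "a = a \<oplus> x \<oplus> a" and aS: "a \<in> S" using a unfolding Reg_add_def add_regular_def by blast
  have bS: "b \<in> S" using b unfolding Reg_add_def by blast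
  have "a \<otimes> b = (a \<oplus> x \<oplus> a) \<otimes> b" using x(2) by metis
  also have "\<dots> = a \<otimes> b \<oplus> x \<otimes> b \<oplus> a \<otimes> b" using x(1) aS bS by (simp add: distr)
  finally have "a \<otimes> b = a \<otimes> b \<oplus> x \<otimes> b \<oplus> a \<otimes> b" .
  thus ?thesis unfolding Reg_add_def add_regular_def using x(1) aS bS by auto
qed

lemma i_to_iii:
  "add_quasi_regular S add \<and>
   (\<forall>a\<in>Reg_add S add. \<forall>b\<in>Reg_add S add. add a b \<in> Reg_add S add) \<and>
   b_lattice_of skew_ring (Reg_add S add) add mul"
proof (intro conjI ballI)
  show "add_quasi_regular S add"
    unfolding add_quasi_regular_def
  proof
    fix a assume "a \<in> S"
    then obtain n where "n > 0" "completely_regular S add mul (nsum add n a)" using qcr by blast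
    thus "\<exists>n>0. add_regular S add (nsum add n a)"
      unfolding completely_regular_def add_regular_def by blast
  qed
  show "a \<oplus> b \<in> Reg_add S add" if "a \<in> Reg_add S add" "b \<in> Reg_add S add" for a b
    using reg_add_closed that by blast
  let ?T = "Reg_add S add"
  have TS: "?T \<subseteq> S" unfolding Reg_add_def by blast
  have cl: "\<forall>a\<in>?T. \<forall>b\<in>?T. a \<oplus> b \<in> ?T \<and> a \<otimes> b \<in> ?T" using reg_add_closed reg_mul_closed by blast
  have subT: "subsemiring ?T S add mul" unfolding subsemiring_def using TS cl by blast
  show "b_lattice_of skew_ring ?T add mul"
    unfolding b_lattice_of_def
  proof (intro conjI semiring_sub[OF sr subT] exI[of _ "rel ?T"])
    show "congruence ?T add mul (rel ?T)" using rel_cong[OF TS cl] .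
    show "b_lattice (?T // rel ?T) (quot_op (rel ?T) add) (quot_op (rel ?T) mul)" using rel_blat[OF TS cl] .
    show "\<forall>X\<in>?T // rel ?T. subsemiring X ?T add mul \<and> skew_ring X add mul"
    proof (rule ball_quot)
      fix a assume a: "a \<in> ?T"
      define e where "e = eps a"
      have e: "e \<in> S" "e \<oplus> e = e" using eps_E a TS e_def by auto
      have X: "rel ?T `` {a} = {b \<in> ?T. eps b = e}" using rel_class a e_def by simp
      have sub: "subsemiring {b \<in> ?T. eps b = e} ?T add mul" using class_sub[OF e TS cl] .
      have subS: "subsemiring {b \<in> ?T. eps b = e} S add mul" using sub TS unfolding subsemiring_def by blast
      have ge: "grp e e" unfolding grp_def using e by blast
      have sk: "skew_ring {b \<in> ?T. eps b = e} add mul"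
        unfolding skew_ring_def
      proof (rule conjI[OF semiring_sub[OF sr subS]], rule bexI[of _ e])
        show "e \<in> {b \<in> ?T. eps b = e}" using ge grp_reg eps_grp by blast
        show "\<forall>p\<in>{b \<in> ?T. eps b = e}. e \<oplus> p = p \<and> p \<oplus> e = p \<and> (\<exists>b\<in>{b \<in> ?T. eps b = e}. p \<oplus> b = e \<and> b \<oplus> p = e)"
        proof
          fix p assume p: "p \<in> {b \<in> ?T. eps b = e}"
          hence gp: "grp e p" using regular_grp unfolding Reg_add_def by auto
          then obtain y where y: "grp e y" "p \<oplus> y = e" "y \<oplus> p = e" using grp_inv by auto
          have yT: "y \<in> {b \<in> ?T. eps b = e}" using y grp_reg eps_grp by blast
          have "e \<oplus> p = p \<and> p \<oplus> e = p" using gp unfolding grp_def by auto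
          thus "e \<oplus> p = p \<and> p \<oplus> e = p \<and> (\<exists>b\<in>{b \<in> ?T. eps b = e}. p \<oplus> b = e \<and> b \<oplus> p = e)"
            using y yT by blast
        qed
      qed
      show "subsemiring (rel ?T `` {a}) ?T add mul \<and> skew_ring (rel ?T `` {a}) add mul"
        using X sub sk by simp
    qed
  qed
qed

end



context srg
begin

lemma ii_qcr:
  assumes "b_lattice_of quasi_skew_ring S add mul"
  shows "\<forall>a\<in>S. \<exists>n>0. completely_regular S add mul (nsum add n a)"
proof
  fix a assume a: "a \<in> S"
  obtain r where r: "congruence S add mul r" "\<forall>X\<in>S // r. subsemiring X S add mul \<and> quasi_skew_ring X add mul"
    using assms unfolding b_lattice_of_def by blast
  have eq: "equiv S r" using r(1) unfolding congruence_def by blast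
  have X: "r `` {a} \<in> S // r" using a by (rule quotientI)
  have aX: "a \<in> r `` {a}" using equiv_class_self[OF eq a] .
  have XS: "r `` {a} \<subseteq> S" and q: "quasi_skew_ring (r `` {a}) add mul"
    using r(2) X unfolding subsemiring_def by auto
  obtain R where R: "subsemiring R (r `` {a}) add mul" "skew_ring R add mul"
    "\<forall>b\<in>r `` {a}. \<exists>n>0. nsum add n b \<in> R"
    using q unfolding quasi_skew_ring_def by blast
  obtain n where n: "n > 0" "nsum add n a \<in> R" using R(3) aX by blast
  have "R \<subseteq> S" using R(1) XS unfolding subsemiring_def by blast
  thus "\<exists>n>0. completely_regular S add mul (nsum add n a)" using skew_cr[OF R(2) _ n(2)] n(1) by blast
qed

lemma iii_qcr:
  assumes aq: "add_quasi_regular S add" and bl: "b_lattice_of skew_ring (Reg_add S add) add mul"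
  shows "\<forall>a\<in>S. \<exists>n>0. completely_regular S add mul (nsum add n a)"
proof
  fix a assume a: "a \<in> S"
  let ?T = "Reg_add S add"
  obtain n where n: "n > 0" "add_regular S add (nsum add n a)" using aq a unfolding add_quasi_regular_def by blast
  have pT: "nsum add n a \<in> ?T" unfolding Reg_add_def using n a by simp
  obtain r where r: "congruence ?T add mul r" "\<forall>X\<in>?T // r. subsemiring X ?T add mul \<and> skew_ring X add mul"
    using bl unfolding b_lattice_of_def by blast
  have eq: "equiv ?T r" using r(1) unfolding congruence_def by blast
  have X: "r `` {nsum add n a} \<in> ?T // r" using pT by (rule quotientI)
  have pX: "nsum add n a \<in> r `` {nsum add n a}" using equiv_class_self[OF eq pT] .
  have XS: "r `` {nsum add n a} \<subseteq> S" and sk: "skew_ring (r `` {nsum add n a}) add mul"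
    using r(2) X unfolding subsemiring_def Reg_add_def by auto
  show "\<exists>n>0. completely_regular S add mul (nsum add n a)" using skew_cr[OF sk XS pX] n(1) by blast
qed

lemma iii_comm:
  assumes cl: "\<forall>a\<in>Reg_add S add. \<forall>b\<in>Reg_add S add. add a b \<in> Reg_add S add"
    and bl: "b_lattice_of skew_ring (Reg_add S add) add mul"
  shows "\<forall>e\<in>add_idem S add. \<forall>f\<in>add_idem S add. e \<oplus> f = f \<oplus> e"
proof (intro ballI)
  fix e f assume ef: "e \<in> add_idem S add" "f \<in> add_idem S add"
  let ?T = "Reg_add S add"
  have E: "e \<in> S" "e \<oplus> e = e" "f \<in> S" "f \<oplus> f = f" using ef unfolding add_idem_def by auto
  have TS: "?T \<subseteq> S" unfolding Reg_add_def by blast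
  have eT: "e \<in> ?T" unfolding Reg_add_def add_regular_def
  proof (intro CollectI conjI E(1) bexI[of _ e])
    show "e = e \<oplus> e \<oplus> e" using E by simp
  qed
  have fT: "f \<in> ?T" unfolding Reg_add_def add_regular_def
  proof (intro CollectI conjI E(3) bexI[of _ f])
    show "f = f \<oplus> f \<oplus> f" using E by simp
  qed
  obtain r where r: "congruence ?T add mul r" "b_lattice (?T // r) (quot_op r add) (quot_op r mul)"
    "\<forall>X\<in>?T // r. subsemiring X ?T add mul \<and> skew_ring X add mul"
    using bl unfolding b_lattice_of_def by blast
  have eq: "equiv ?T r" using r(1) unfolding congruence_def by blast
  let ?q = "quot_op r add"
  have qa: "x \<in> ?T \<Longrightarrow> y \<in> ?T \<Longrightarrow> ?q (r `` {x}) (r `` {y}) = r `` {x \<oplus> y}" for x y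
    using cong_quot_add[OF r(1)] by blast
  have bl1: "semiring (?T // r) ?q (quot_op r mul)" and bl2: "\<forall>X\<in>?T // r. ?q X X = X"
    and bl3: "\<forall>X\<in>?T // r. \<forall>Y\<in>?T // r. ?q X Y = ?q Y X"
    using r(2) unfolding b_lattice_def by auto
  have QA: "X \<in> ?T // r \<Longrightarrow> Y \<in> ?T // r \<Longrightarrow> Z \<in> ?T // r \<Longrightarrow> ?q (?q X Y) Z = ?q X (?q Y Z)" for X Y Z
    using bl1 unfolding semiring_def by blast
  have QC: "X \<in> ?T // r \<Longrightarrow> Y \<in> ?T // r \<Longrightarrow> ?q X Y = ?q Y X" for X Y
    using bl3 by blast
  have QI: "X \<in> ?T // r \<Longrightarrow> ?q X X = X" for X
    using bl2 by blast
  have eQ: "r `` {e} \<in> ?T // r" and fQ: "r `` {f} \<in> ?T // r" using eT fT by (auto intro: quotientI)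
  have efT: "e \<oplus> f \<in> ?T" "f \<oplus> e \<in> ?T" using cl eT fT by auto
  define G where "G = r `` {e \<oplus> f}"
  have GQ: "G \<in> ?T // r" unfolding G_def using efT by (auto intro: quotientI)
  have Gq: "G = ?q (r `` {e}) (r `` {f})" unfolding G_def using qa eT fT by simp
  have efG: "e \<oplus> f \<in> G" unfolding G_def using equiv_class_self[OF eq efT(1)] .
  have feG: "f \<oplus> e \<in> G"
  proof -
    have "r `` {f \<oplus> e} = ?q (r `` {f}) (r `` {e})" using qa eT fT by simp
    also have "\<dots> = G" using Gq QC[OF fQ eQ] by simp
    finally show ?thesis using equiv_class_self[OF eq efT(2)] by simp
  qed
  have sk: "skew_ring G add mul" and GT: "G \<subseteq> ?T" using r(3) GQ unfolding subsemiring_def by auto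
  have srG: "semiring G add mul" using sk unfolding skew_ring_def by blast
  obtain z where z: "z \<in> G" "\<forall>a\<in>G. z \<oplus> a = a \<and> a \<oplus> z = a \<and> (\<exists>b\<in>G. a \<oplus> b = z \<and> b \<oplus> a = z)"
    using sk unfolding skew_ring_def by blast
  have zS: "z \<in> S" "z \<in> ?T" using z GT TS by auto
  have zz: "z \<oplus> z = z" using z by blast
  obtain w where w: "w \<in> G" "(e \<oplus> f) \<oplus> w = z" "w \<oplus> (e \<oplus> f) = z" using z efG by blast
  have wS: "w \<in> S" using w(1) GT TS by auto
  have zr: "(e \<oplus> f, z) \<in> r" using z(1) unfolding G_def by simp
  have zG: "r `` {z} = G" unfolding G_def using equiv_class_eq[OF eq zr] by simp
  have eef: "e \<oplus> (e \<oplus> f) = e \<oplus> f" by (metis E(1) E(2) E(3) aassoc)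
  have ffe: "(e \<oplus> f) \<oplus> f = e \<oplus> f" by (metis E(1) E(3) E(4) aassoc)
  have ez: "e \<oplus> z = z"
  proof -
    have "e \<oplus> z = e \<oplus> ((e \<oplus> f) \<oplus> w)" by (simp only: w(2))
    also have "\<dots> = (e \<oplus> (e \<oplus> f)) \<oplus> w" using E wS by (metis aassoc cl_add)
    also have "\<dots> = z" by (simp only: eef w(2))
    finally show ?thesis .
  qed
  have zf: "z \<oplus> f = z"
  proof -
    have "z \<oplus> f = (w \<oplus> (e \<oplus> f)) \<oplus> f" by (simp only: w(3))
    also have "\<dots> = w \<oplus> ((e \<oplus> f) \<oplus> f)" using E wS by (metis aassoc cl_add)
    also have "\<dots> = z" by (simp only: ffe w(3))
    finally show ?thesis .
  qed
  have ze: "z \<oplus> e = z"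
  proof (rule skew_idem[OF sk _ _ z(1)])
    show "\<forall>a\<in>G. z \<oplus> a = a \<and> a \<oplus> z = a" using z(2) by blast
    have "r `` {z \<oplus> e} = ?q (r `` {z}) (r `` {e})" using qa[OF zS(2) eT] by simp
    also have "\<dots> = ?q G (r `` {e})" by (simp only: zG)
    also have "\<dots> = ?q (?q (r `` {e}) (r `` {f})) (r `` {e})" using Gq by simp
    also have "\<dots> = ?q (r `` {e}) (?q (r `` {f}) (r `` {e}))" by (rule QA[OF eQ fQ eQ])
    also have "\<dots> = ?q (r `` {e}) (?q (r `` {e}) (r `` {f}))" by (simp only: QC[OF fQ eQ])
    also have "\<dots> = ?q (?q (r `` {e}) (r `` {e})) (r `` {f})" by (rule QA[OF eQ eQ fQ, symmetric])
    also have "\<dots> = G" by (simp only: QI[OF eQ] Gq)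
    finally show "z \<oplus> e \<in> G" using equiv_class_self[OF eq, of "z \<oplus> e"] cl zS eT by auto
    have "(z \<oplus> e) \<oplus> (z \<oplus> e) = z \<oplus> ((e \<oplus> z) \<oplus> e)" using zS E by simp
    also have "\<dots> = z \<oplus> (z \<oplus> e)" by (simp only: ez)
    also have "\<dots> = (z \<oplus> z) \<oplus> e" by (rule aassoc[symmetric, OF zS(1) zS(1) E(1)])
    also have "\<dots> = z \<oplus> e" by (simp only: zz)
    finally show "(z \<oplus> e) \<oplus> (z \<oplus> e) = z \<oplus> e" .
  qed
  have fz: "f \<oplus> z = z"
  proof (rule skew_idem[OF sk _ _ z(1)])
    show "\<forall>a\<in>G. z \<oplus> a = a \<and> a \<oplus> z = a" using z(2) by blast
    have "r `` {f \<oplus> z} = ?q (r `` {f}) (r `` {z})" using qa[OF fT zS(2)] by simp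
    also have "\<dots> = ?q (r `` {f}) G" by (simp only: zG)
    also have "\<dots> = ?q (r `` {f}) (?q (r `` {e}) (r `` {f}))" using Gq by simp
    also have "\<dots> = ?q (?q (r `` {f}) (r `` {e})) (r `` {f})" by (rule QA[OF fQ eQ fQ, symmetric])
    also have "\<dots> = ?q (?q (r `` {e}) (r `` {f})) (r `` {f})" by (simp only: QC[OF fQ eQ])
    also have "\<dots> = ?q (r `` {e}) (?q (r `` {f}) (r `` {f}))" by (rule QA[OF eQ fQ fQ])
    also have "\<dots> = G" by (simp only: QI[OF fQ] Gq)
    finally show "f \<oplus> z \<in> G" using equiv_class_self[OF eq, of "f \<oplus> z"] cl zS fT by auto
    have "(f \<oplus> z) \<oplus> (f \<oplus> z) = f \<oplus> ((z \<oplus> f) \<oplus> z)" using zS E by simp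
    also have "\<dots> = f \<oplus> z" by (simp only: zf zz)
    finally show "(f \<oplus> z) \<oplus> (f \<oplus> z) = f \<oplus> z" .
  qed
  have "e \<oplus> f = z \<oplus> (e \<oplus> f)" using z(2) efG by simp
  also have "\<dots> = (z \<oplus> e) \<oplus> f" using zS E by simp
  also have "\<dots> = z" using ze zf by simp
  finally have 1: "e \<oplus> f = z" .
  have "f \<oplus> e = z \<oplus> (f \<oplus> e)" using z(2) feG by simp
  also have "\<dots> = (z \<oplus> f) \<oplus> e" using zS E by simp
  also have "\<dots> = z" using ze zf by simp
  finally have 2: "f \<oplus> e = z" .
  show "e \<oplus> f = f \<oplus> e" using 1 2 by simp
qed

end



lemma mk_qc:
  assumes "semiring S add mul" "\<forall>a\<in>S. \<exists>n>0. completely_regular S add mul (nsum add n a)"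
    "\<forall>e\<in>add_idem S add. \<forall>f\<in>add_idem S add. add e f = add f e"
  shows "qc S add mul"
  using assms by (simp add: qc_def qc_axioms_def srg_def)

theorem theorem3p7:
  fixes S :: "'a set" and add mul :: "'a \<Rightarrow> 'a \<Rightarrow> 'a"
  assumes "semiring S add mul"
  shows "((quasi_completely_regular S add mul \<and>
           (\<forall>e\<in>add_idem S add. \<forall>f\<in>add_idem S add. add e f = add f e))
          \<longleftrightarrow>
          (b_lattice_of quasi_skew_ring S add mul \<and>
           (\<forall>e\<in>add_idem S add. \<forall>f\<in>add_idem S add. add e f = add f e)))
       \<and> ((b_lattice_of quasi_skew_ring S add mul \<and>
           (\<forall>e\<in>add_idem S add. \<forall>f\<in>add_idem S add. add e f = add f e))
          \<longleftrightarrow>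
          (add_quasi_regular S add \<and>
           (\<forall>a\<in>Reg_add S add. \<forall>b\<in>Reg_add S add. add a b \<in> Reg_add S add) \<and>
           b_lattice_of skew_ring (Reg_add S add) add mul))"
proof -
  have s: "srg S add mul" using assms by (simp add: srg_def)
  let ?C = "\<forall>e\<in>add_idem S add. \<forall>f\<in>add_idem S add. add e f = add f e"
  let ?Q = "\<forall>a\<in>S. \<exists>n>0. completely_regular S add mul (nsum add n a)"
  have qcr_eq: "quasi_completely_regular S add mul \<longleftrightarrow> ?Q"
    unfolding quasi_completely_regular_def using assms by simp
  have i_ii: "b_lattice_of quasi_skew_ring S add mul" if "?Q" "?C"
    using qc.i_to_ii[OF mk_qc[OF assms that]] .
  have ii_i: "?Q" if "b_lattice_of quasi_skew_ring S add mul"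
    using srg.ii_qcr[OF s that] .
  have i_iii: "add_quasi_regular S add \<and>
           (\<forall>a\<in>Reg_add S add. \<forall>b\<in>Reg_add S add. add a b \<in> Reg_add S add) \<and>
           b_lattice_of skew_ring (Reg_add S add) add mul" if "?Q" "?C"
    using qc.i_to_iii[OF mk_qc[OF assms that]] .
  have iii_i: "?Q \<and> ?C" if "add_quasi_regular S add"
    "\<forall>a\<in>Reg_add S add. \<forall>b\<in>Reg_add S add. add a b \<in> Reg_add S add"
    "b_lattice_of skew_ring (Reg_add S add) add mul"
    using srg.iii_qcr[OF s that(1,3)] srg.iii_comm[OF s that(2,3)] by blast
  show ?thesis using qcr_eq i_ii ii_i i_iii iii_i by blast
qed


end
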